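(* Let $p\geq 1$ be an integer and let $\mathcal{K}_p$ be the integral operator on $L^2([-1,1])$ given by $\mathcal{K}_p[h](x)=\int_{-1}^1\mathcal{G}_p(x,y)h(y)\,dy$, where $\mathcal{G}_p(x,y)=\int_{-1}^1 \mathrm{ReLU}^p(z-x)\,\mathrm{ReLU}^p(z-y)\,dz$. Let $\mu_{1,p}>\mu_{2,p}>\cdots$ be the eigenvalues of $\mathcal{K}_p$ in descending order, with corresponding eigenfunctions $\varphi_{k,p}$ (so $\mathcal{K}_p[\varphi_{k,p}]=\mu_{k,p}\varphi_{k,p}$). Then, as $k\to+\infty$, $$\mu_{k,p}=\mathcal{O}\big(k^{-(2p+2)}\big).$$
   Context: $\mathrm{ReLU}^p(z)=(\max\{0,z\})^p$. The operator $\mathcal{K}_p$ is a compact self-adjoint operator on $L^2([-1,1])$ with positive eigenvalues. *)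

theory Defs
  imports "HOL-Analysis.Analysis" "HOL-Library.Landau_Symbols"
begin

definition relu_pow :: "nat \<Rightarrow> real \<Rightarrow> real" where
  "relu_pow p z = (max 0 z) ^ p"

definition G_kernel :: "nat \<Rightarrow> real \<Rightarrow> real \<Rightarrow> real" where
  "G_kernel p x y = (LINT z:{-1..1}|lborel. relu_pow p (z - x) * relu_pow p (z - y))"

definition K_op :: "nat \<Rightarrow> (real \<Rightarrow> real) \<Rightarrow> real \<Rightarrow> real" where
  "K_op p h x = (LINT y:{-1..1}|lborel. G_kernel p x y * h y)"

definition L2_interval :: "(real \<Rightarrow> real) set" where
  "L2_interval = {h. h \<in> borel_measurable lborel \<and> set_integrable lborel {-1..1} (\<lambda>x. (h x)^2)}"

definition is_eigenvalue_K :: "nat \<Rightarrow> real \<Rightarrow> bool" where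
  "is_eigenvalue_K p m \<longleftrightarrow>
     (\<exists>h \<in> L2_interval.
        \<not> (AE x in lborel. x \<in> {-1..1} \<longrightarrow> h x = 0) \<and>
        (AE x in lborel. x \<in> {-1..1} \<longrightarrow> K_op p h x = m * h x))"

end

theory Submission
  imports Defs
begin


lemma relu_meas[measurable]: "relu_pow p \<in> borel_measurable borel"
  unfolding relu_pow_def by measurable

lemma relu_nonneg: "relu_pow p z \<ge> 0"
  unfolding relu_pow_def by simp

lemma relu_bound: "z \<le> B \<Longrightarrow> relu_pow p z \<le> (max 0 B) ^ p"
  unfolding relu_pow_def by (intro power_mono) auto

lemma fub:
  fixes a b :: "real \<Rightarrow> real" and k :: "real \<Rightarrow> real \<Rightarrow> real"
  assumes am[measurable]: "a \<in> borel_measurable borel" and ai: "set_integrable lborel {-1..1} a"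
    and bm[measurable]: "b \<in> borel_measurable borel" and bi: "set_integrable lborel {-1..1} b"
    and km[measurable]: "case_prod k \<in> borel_measurable (borel \<Otimes>\<^sub>M borel)"
    and kb: "\<And>y z. y \<in> {-1..1} \<Longrightarrow> z \<in> {-1..1} \<Longrightarrow> \<bar>k y z\<bar> \<le> C"
  shows "(LINT y:{-1..1}|lborel. a y * (LINT z:{-1..1}|lborel. k y z * b z))
       = (LINT z:{-1..1}|lborel. b z * (LINT y:{-1..1}|lborel. k y z * a y))"
proof -

  define I where "I = (indicator {-1..1} :: real \<Rightarrow> real)"
  have Im[measurable]: "I \<in> borel_measurable borel" unfolding I_def by measurable
  define F where "F = (\<lambda>y z. I y * I z * (a y * k y z * b z))"
  define Q where "Q = (\<lambda>(y,z). C * (I y * \<bar>a y\<bar>) * (I z * \<bar>b z\<bar>))"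
  have ai': "integrable lborel (\<lambda>y. I y * \<bar>a y\<bar>)"
  proof -
    have "integrable lborel (\<lambda>y. \<bar>I y * a y\<bar>)" using ai
      unfolding set_integrable_def I_def by (intro integrable_abs) simp
    moreover have "(\<lambda>y. \<bar>I y * a y\<bar>) = (\<lambda>y. I y * \<bar>a y\<bar>)"
      by (auto simp: I_def indicator_def fun_eq_iff)
    ultimately show ?thesis by simp
  qed
  have bi': "integrable lborel (\<lambda>y. I y * \<bar>b y\<bar>)"
  proof -
    have "integrable lborel (\<lambda>y. \<bar>I y * b y\<bar>)" using bi
      unfolding set_integrable_def I_def by (intro integrable_abs) simp
    moreover have "(\<lambda>y. \<bar>I y * b y\<bar>) = (\<lambda>y. I y * \<bar>b y\<bar>)"
      by (auto simp: I_def indicator_def fun_eq_iff)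
    ultimately show ?thesis by simp
  qed
  have Qi: "integrable (lborel \<Otimes>\<^sub>M lborel) Q"
  proof (rule lborel_pair.Fubini_integrable)
    show "Q \<in> borel_measurable (lborel \<Otimes>\<^sub>M lborel)" unfolding Q_def by measurable
    have "(\<lambda>y. \<integral>z. norm (Q (y, z)) \<partial>lborel) = (\<lambda>y. (\<bar>C\<bar> * (I y * \<bar>a y\<bar>)) * (\<integral>z. I z * \<bar>b z\<bar> \<partial>lborel))"
      unfolding Q_def I_def by (auto simp: abs_mult indicator_def)
    then show "integrable lborel (\<lambda>y. \<integral>z. norm (Q (y, z)) \<partial>lborel)"
      using ai' by simp
    show "AE y in lborel. integrable lborel (\<lambda>z. Q (y, z))"
      unfolding Q_def using bi' by simp
  qed
  have Fi: "integrable (lborel \<Otimes>\<^sub>M lborel) (case_prod F)"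
  proof (rule Bochner_Integration.integrable_bound[OF Qi])
    show "case_prod F \<in> borel_measurable (lborel \<Otimes>\<^sub>M lborel)" unfolding F_def by measurable
    show "AE x in lborel \<Otimes>\<^sub>M lborel. norm (case_prod F x) \<le> norm (Q x)"
    proof (rule AE_I2)
      fix x :: "real \<times> real"
      obtain y z where xyz: "x = (y, z)" by fastforce
      have H1: "\<bar>I y * I z * (a y * k y z * b z)\<bar> \<le> C * (I y * \<bar>a y\<bar>) * (I z * \<bar>b z\<bar>)"
      proof (cases "y \<in> {-1..1} \<and> z \<in> {-1..1}")
        case True
        then have "\<bar>k y z\<bar> \<le> C" using kb by auto
        then have "\<bar>a y\<bar> * (\<bar>k y z\<bar> * \<bar>b z\<bar>) \<le> C * (\<bar>a y\<bar> * \<bar>b z\<bar>)"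
          by (metis abs_ge_zero mult.left_commute mult_left_mono mult_right_mono)
        then show ?thesis using True
          by (simp add: I_def abs_mult mult.assoc)
      next
        case False
        then show ?thesis by (auto simp: I_def)
      qed
      have C0: "C \<ge> 0" using kb[of 0 0] by simp
      have H2: "C * (I y * \<bar>a y\<bar>) * (I z * \<bar>b z\<bar>) \<ge> 0" using C0 by (simp add: I_def)
      show "norm (case_prod F x) \<le> norm (Q x)"
        using H1 H2 unfolding F_def Q_def xyz by simp
    qed
  qed
  have in1: "(\<integral>z. F y z \<partial>lborel) = (I y * a y) * (\<integral>z. I z * (k y z * b z) \<partial>lborel)" for y
  proof -
    have "(\<lambda>z. F y z) = (\<lambda>z. (I y * a y) * (I z * (k y z * b z)))"
      by (simp add: F_def fun_eq_iff mult_ac)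
    then show ?thesis by (simp only: integral_mult_right_zero)
  qed
  have in2: "(\<integral>y. F y z \<partial>lborel) = (I z * b z) * (\<integral>y. I y * (k y z * a y) \<partial>lborel)" for z
  proof -
    have "(\<lambda>y. F y z) = (\<lambda>y. (I z * b z) * (I y * (k y z * a y)))"
      by (simp add: F_def fun_eq_iff mult_ac)
    then show ?thesis by (simp only: integral_mult_right_zero)
  qed
  have "(LINT y:{-1..1}|lborel. a y * (LINT z:{-1..1}|lborel. k y z * b z))
      = (\<integral>y. (\<integral>z. F y z \<partial>lborel) \<partial>lborel)"
    unfolding set_lebesgue_integral_def in1 by (simp add: I_def mult_ac)
  also have "\<dots> = (\<integral>z. (\<integral>y. F y z \<partial>lborel) \<partial>lborel)"
    using lborel_pair.Fubini_integral[OF Fi] by simp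
  also have "\<dots> = (LINT z:{-1..1}|lborel. b z * (LINT y:{-1..1}|lborel. k y z * a y))"
    unfolding set_lebesgue_integral_def in2 by (simp add: I_def mult_ac)
  finally show ?thesis .
qed

lemma relu_cont: "continuous_on S (\<lambda>z. relu_pow p (f z))" if "continuous_on S f"
  unfolding relu_pow_def using that by (intro continuous_intros)

abbreviation "J \<equiv> {-1..1::real}"

lemma set_int_cong_sum:
  fixes f :: "'i \<Rightarrow> real \<Rightarrow> real"
  assumes "finite I" "\<And>i. i \<in> I \<Longrightarrow> set_integrable lborel A (f i)"
  shows "set_integrable lborel A (\<lambda>x. \<Sum>i\<in>I. f i x)"
    and "(LINT x:A|lborel. (\<Sum>i\<in>I. f i x)) = (\<Sum>i\<in>I. LINT x:A|lborel. f i x)"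
proof -
  have e: "(\<lambda>x. indicator A x *\<^sub>R (\<Sum>i\<in>I. f i x)) = (\<lambda>x. \<Sum>i\<in>I. indicator A x *\<^sub>R f i x)"
    by (intro ext) (simp only: scaleR_sum_right)
  show "set_integrable lborel A (\<lambda>x. \<Sum>i\<in>I. f i x)"
    using assms unfolding set_integrable_def e by (intro Bochner_Integration.integrable_sum) auto
  show "(LINT x:A|lborel. (\<Sum>i\<in>I. f i x)) = (\<Sum>i\<in>I. LINT x:A|lborel. f i x)"
    using assms unfolding set_integrable_def set_lebesgue_integral_def e by (intro Bochner_Integration.integral_sum) auto
qed

lemma L2_meas[measurable_dest]: "h \<in> L2_interval \<Longrightarrow> h \<in> borel_measurable borel"
  unfolding L2_interval_def by auto

lemma L2_sq: "h \<in> L2_interval \<Longrightarrow> set_integrable lborel J (\<lambda>x. h x * h x)"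
  unfolding L2_interval_def by (simp add: power2_eq_square)

lemma const_int: "set_integrable lborel J (\<lambda>x. c::real)"
  by (rule borel_integrable_atLeastAtMost') (intro continuous_intros)

lemma L2_int: assumes "h \<in> L2_interval" shows "set_integrable lborel J h"
proof (rule set_integrable_bound[where f="\<lambda>x. 1 + h x * h x"])
  show "set_integrable lborel J (\<lambda>x. 1 + h x * h x)"
    using L2_sq[OF assms] const_int by (intro set_integral_add) auto
  show "set_borel_measurable lborel J h" using assms unfolding set_borel_measurable_def by measurable
  have "\<bar>t\<bar> \<le> \<bar>1 + t * t\<bar>" for t :: real
  proof -
    have "0 \<le> (\<bar>t\<bar> - 1) * (\<bar>t\<bar> - 1)" by simp
    moreover have "\<bar>t\<bar> * \<bar>t\<bar> = t * t" by (simp add: abs_mult_self_eq)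
    moreover have "0 \<le> t * t" by simp
    ultimately show ?thesis by (simp add: algebra_simps)
  qed
  then show "AE x in lborel. x \<in> J \<longrightarrow> norm (h x) \<le> norm (1 + h x * h x)" by auto
qed

lemma L2_mult: assumes "f \<in> L2_interval" "g \<in> L2_interval"
  shows "set_integrable lborel J (\<lambda>x. f x * g x)"
proof (rule set_integrable_bound[where f="\<lambda>x. f x * f x + g x * g x"])
  show "set_integrable lborel J (\<lambda>x. f x * f x + g x * g x)"
    using L2_sq assms by (intro set_integral_add) auto
  show "set_borel_measurable lborel J (\<lambda>x. f x * g x)" using assms unfolding set_borel_measurable_def by measurable
  have "\<bar>s * t\<bar> \<le> \<bar>s * s + t * t\<bar>" for s t :: real
  proof -
    have "0 \<le> (\<bar>s\<bar> - \<bar>t\<bar>) * (\<bar>s\<bar> - \<bar>t\<bar>)" by simp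
    moreover have "\<bar>s\<bar> * \<bar>s\<bar> = s * s" "\<bar>t\<bar> * \<bar>t\<bar> = t * t" by (simp_all add: abs_mult_self_eq)
    ultimately have A: "2 * (\<bar>s\<bar> * \<bar>t\<bar>) \<le> s * s + t * t" by (simp add: algebra_simps)
    have B: "0 \<le> \<bar>s\<bar> * \<bar>t\<bar>" by simp
    have C: "0 \<le> s * s + t * t" by simp
    have D: "\<bar>s * t\<bar> = \<bar>s\<bar> * \<bar>t\<bar>" by (simp add: abs_mult)
    have E: "\<bar>s * s + t * t\<bar> = s * s + t * t" using C by simp
    show ?thesis unfolding D E using A B by linarith
  qed
  then show "AE x in lborel. x \<in> J \<longrightarrow> norm (f x * g x) \<le> norm (f x * f x + g x * g x)" by auto
qed

lemma bdd_mult: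
  fixes \<phi> f :: "real \<Rightarrow> real"
  assumes [measurable]: "\<phi> \<in> borel_measurable borel" "f \<in> borel_measurable borel"
    and b: "\<And>x. x \<in> J \<Longrightarrow> \<bar>\<phi> x\<bar> \<le> B" and fi: "set_integrable lborel J f"
  shows "set_integrable lborel J (\<lambda>x. \<phi> x * f x)"
proof (rule set_integrable_bound[where f="\<lambda>x. B * f x"])
  show "set_integrable lborel J (\<lambda>x. B * f x)" using fi by simp
  show "set_borel_measurable lborel J (\<lambda>x. \<phi> x * f x)" unfolding set_borel_measurable_def by measurable
  have "B \<ge> 0" using b[of 0] by simp
  then show "AE x in lborel. x \<in> J \<longrightarrow> norm (\<phi> x * f x) \<le> norm (B * f x)"
    using b by (auto simp: abs_mult intro!: mult_right_mono)
qed

lemma bdd_L2: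
  fixes \<phi> :: "real \<Rightarrow> real"
  assumes [measurable]: "\<phi> \<in> borel_measurable borel" and b: "\<And>x. x \<in> J \<Longrightarrow> \<bar>\<phi> x\<bar> \<le> B"
  shows "\<phi> \<in> L2_interval"
proof -
  have "set_integrable lborel J (\<lambda>x. \<phi> x * 1)"
    by (rule bdd_mult[OF _ _ b]) (auto intro: const_int)
  then have "set_integrable lborel J (\<lambda>x. \<phi> x * \<phi> x)"
    by (intro bdd_mult[OF _ _ b]) auto
  then show ?thesis unfolding L2_interval_def by (simp add: power2_eq_square)
qed

definition Top :: "nat \<Rightarrow> (real \<Rightarrow> real) \<Rightarrow> real \<Rightarrow> real" where
  "Top p h z = (LINT y:J|lborel. relu_pow p (z - y) * h y)"

definition Tad :: "nat \<Rightarrow> (real \<Rightarrow> real) \<Rightarrow> real \<Rightarrow> real" where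
  "Tad p h x = (LINT z:J|lborel. relu_pow p (z - x) * h z)"

lemma Top_meas[measurable]: assumes [measurable]: "h \<in> borel_measurable borel" shows "Top p h \<in> borel_measurable borel"
  unfolding Top_def set_lebesgue_integral_def
  by (rule lborel.borel_measurable_lebesgue_integral) measurable

lemma Tad_meas[measurable]: assumes [measurable]: "h \<in> borel_measurable borel" shows "Tad p h \<in> borel_measurable borel"
  unfolding Tad_def set_lebesgue_integral_def
  by (rule lborel.borel_measurable_lebesgue_integral) measurable

lemma relu_J: "x \<in> J \<Longrightarrow> y \<in> J \<Longrightarrow> \<bar>relu_pow p (x - y)\<bar> \<le> 2 ^ p"
  using relu_bound[of "x - y" 2 p] relu_nonneg[of p "x - y"] by auto

lemma Top_bound:
  assumes h: "h \<in> L2_interval" and z: "z \<in> J"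
  shows "\<bar>Top p h z\<bar> \<le> 2 ^ p * (LINT y:J|lborel. \<bar>h y\<bar>)"
proof -
  have hi: "set_integrable lborel J h" using L2_int[OF h] .
  have ri: "set_integrable lborel J (\<lambda>y. relu_pow p (z - y) * h y)"
    using h hi by (intro bdd_mult[where B="2^p"] relu_J z) auto
  have "\<bar>Top p h z\<bar> \<le> (LINT y:J|lborel. \<bar>relu_pow p (z - y) * h y\<bar>)"
    unfolding Top_def using set_integral_norm_bound[OF ri] by simp
  also have "\<dots> \<le> (LINT y:J|lborel. 2 ^ p * \<bar>h y\<bar>)"
  proof (rule set_integral_mono)
    show "set_integrable lborel J (\<lambda>y. \<bar>relu_pow p (z - y) * h y\<bar>)" using set_integrable_abs[OF ri] .
    show "set_integrable lborel J (\<lambda>y. 2 ^ p * \<bar>h y\<bar>)" using set_integrable_abs[OF hi] by simp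
  qed (use relu_J[OF z] in \<open>auto simp: abs_mult intro!: mult_right_mono\<close>)
  finally show ?thesis by simp
qed

lemma Top_L2: "h \<in> L2_interval \<Longrightarrow> Top p h \<in> L2_interval"
  by (rule bdd_L2[OF _ Top_bound]) auto

lemma Tad_bound:
  assumes h: "h \<in> L2_interval" and z: "z \<in> J"
  shows "\<bar>Tad p h z\<bar> \<le> 2 ^ p * (LINT y:J|lborel. \<bar>h y\<bar>)"
proof -
  have hi: "set_integrable lborel J h" using L2_int[OF h] .
  have ri: "set_integrable lborel J (\<lambda>y. relu_pow p (y - z) * h y)"
    using h hi by (intro bdd_mult[where B="2^p"] relu_J z) auto
  have "\<bar>Tad p h z\<bar> \<le> (LINT y:J|lborel. \<bar>relu_pow p (y - z) * h y\<bar>)"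
    unfolding Tad_def using set_integral_norm_bound[OF ri] by simp
  also have "\<dots> \<le> (LINT y:J|lborel. 2 ^ p * \<bar>h y\<bar>)"
  proof (rule set_integral_mono)
    show "set_integrable lborel J (\<lambda>y. \<bar>relu_pow p (y - z) * h y\<bar>)" using set_integrable_abs[OF ri] .
    show "set_integrable lborel J (\<lambda>y. 2 ^ p * \<bar>h y\<bar>)" using set_integrable_abs[OF hi] by simp
  qed (use relu_J[OF _ z] in \<open>auto simp: abs_mult intro!: mult_right_mono\<close>)
  finally show ?thesis by simp
qed

lemma Tad_L2: "h \<in> L2_interval \<Longrightarrow> Tad p h \<in> L2_interval"
  by (rule bdd_L2[OF _ Tad_bound]) auto

lemma K_eq:
  assumes h: "h \<in> L2_interval" and x: "x \<in> J"
  shows "K_op p h x = Tad p (Top p h) x"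
proof -
  have "K_op p h x = (LINT y:J|lborel. h y * (LINT z:J|lborel. relu_pow p (z - y) * relu_pow p (z - x)))"
    unfolding K_op_def G_kernel_def by (simp add: mult.commute)
  also have "\<dots> = (LINT z:J|lborel. relu_pow p (z - x) * (LINT y:J|lborel. relu_pow p (z - y) * h y))"
  proof (rule fub[where C="2^p"])
    show "set_integrable lborel J h" using L2_int[OF h] .
    show "set_integrable lborel J (\<lambda>z. relu_pow p (z - x))"
      by (rule borel_integrable_atLeastAtMost') (intro relu_cont continuous_intros)
    show "(\<lambda>(y, z). relu_pow p (z - y)) \<in> borel_measurable (borel \<Otimes>\<^sub>M borel)" by measurable
  qed (use h relu_J in auto)
  finally show ?thesis unfolding Tad_def Top_def .
qed

lemma KT:
  assumes h: "h \<in> L2_interval" and g: "g \<in> L2_interval"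
  shows "(LINT x:J|lborel. K_op p h x * g x) = (LINT z:J|lborel. Top p h z * Top p g z)"
proof -
  have "(LINT x:J|lborel. K_op p h x * g x) = (LINT x:J|lborel. g x * Tad p (Top p h) x)"
    by (rule set_lebesgue_integral_cong) (auto simp: K_eq[OF h] mult.commute)
  also have "\<dots> = (LINT z:J|lborel. Top p h z * (LINT x:J|lborel. relu_pow p (z - x) * g x))"
    unfolding Tad_def
  proof (rule fub[where C="2^p"])
    show "set_integrable lborel J g" using L2_int[OF g] .
    show "set_integrable lborel J (Top p h)" using L2_int[OF Top_L2[OF h]] .
    show "(\<lambda>(y, z). relu_pow p (z - y)) \<in> borel_measurable (borel \<Otimes>\<^sub>M borel)" by measurable
  qed (use h g relu_J in auto)
  finally show ?thesis unfolding Top_def .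
qed

lemma eig_inner:
  assumes h: "h \<in> L2_interval" and e: "AE x in lborel. x \<in> J \<longrightarrow> K_op p h x = m * h x"
    and g: "g \<in> L2_interval"
  shows "(LINT z:J|lborel. Top p h z * Top p g z) = m * (LINT x:J|lborel. h x * g x)"
proof -
  have [measurable]: "h \<in> borel_measurable borel" "g \<in> borel_measurable borel" using h g by auto
  have "(LINT z:J|lborel. Top p h z * Top p g z) = (LINT x:J|lborel. K_op p h x * g x)"
    using KT[OF h g] by simp
  also have "\<dots> = (LINT x:J|lborel. Tad p (Top p h) x * g x)"
    by (rule set_lebesgue_integral_cong) (auto simp: K_eq[OF h])
  also have "\<dots> = (LINT x:J|lborel. m * (h x * g x))"
  proof (rule set_lebesgue_integral_cong_AE)
    show "AE x\<in>J in lborel. Tad p (Top p h) x * g x = m * (h x * g x)"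
      using e by eventually_elim (auto simp: K_eq[OF h])
  qed auto
  also have "\<dots> = m * (LINT x:J|lborel. h x * g x)" by simp
  finally show ?thesis .
qed

lemma norm_pos:
  assumes h: "h \<in> L2_interval" and nz: "\<not> (AE x in lborel. x \<in> J \<longrightarrow> h x = 0)"
  shows "(LINT x:J|lborel. h x * h x) > 0"
proof -
  have [measurable]: "h \<in> borel_measurable borel" using h by auto
  have i: "integrable lborel (\<lambda>x. indicator J x * (h x * h x))"
    using L2_sq[OF h] unfolding set_integrable_def by simp
  have ge: "(LINT x:J|lborel. h x * h x) \<ge> 0"
    unfolding set_lebesgue_integral_def by (intro Bochner_Integration.integral_nonneg) (auto simp: indicator_def)
  have "(LINT x:J|lborel. h x * h x) \<noteq> 0"
  proof
    assume "(LINT x:J|lborel. h x * h x) = 0"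
    then have "integral\<^sup>L lborel (\<lambda>x. indicator J x * (h x * h x)) = 0"
      unfolding set_lebesgue_integral_def by simp
    then have "AE x in lborel. indicator J x * (h x * h x) = 0"
      using integral_nonneg_eq_0_iff_AE[OF i] by (auto simp: indicator_def)
    then have "AE x in lborel. x \<in> J \<longrightarrow> h x = 0"
      by eventually_elim (auto simp: indicator_def)
    with nz show False by blast
  qed
  with ge show ?thesis by simp
qed

lemma linalg:
  fixes a :: "'j \<Rightarrow> 'i \<Rightarrow> real"
  assumes "finite C" "finite I" "card C < card I"
  shows "\<exists>c. (\<exists>i\<in>I. c i \<noteq> 0) \<and> (\<forall>j\<in>C. (\<Sum>i\<in>I. a j i * c i) = 0)"
  using assms
proof (induction C arbitrary: I a rule: finite_induct)
  case empty
  then obtain i where "i \<in> I" by fastforce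
  then show ?case by (intro exI[of _ "\<lambda>k. if k = i then 1 else 0"]) auto
next
  case (insert j C)
  show ?case
  proof (cases "\<forall>i\<in>I. a j i = 0")
    case True
    from insert.IH[of I a] insert.prems insert.hyps obtain c where
      c: "\<exists>i\<in>I. c i \<noteq> 0" "\<forall>k\<in>C. (\<Sum>i\<in>I. a k i * c i) = 0" by auto
    then show ?thesis using True by (intro exI[of _ c]) auto
  next
    case False
    then obtain i0 where i0: "i0 \<in> I" "a j i0 \<noteq> 0" by auto
    define I' where "I' = I - {i0}"
    define a' where "a' = (\<lambda>k i. a k i - a k i0 * a j i / a j i0)"
    have cI': "card C < card I'" using insert.prems insert.hyps i0 unfolding I'_def by auto
    from insert.IH[of I' a'] insert.prems cI' obtain c' where
      c': "\<exists>i\<in>I'. c' i \<noteq> 0" "\<forall>k\<in>C. (\<Sum>i\<in>I'. a' k i * c' i) = 0"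
      unfolding I'_def by auto
    define c where "c = (\<lambda>i. if i = i0 then - (\<Sum>i\<in>I'. a j i * c' i) / a j i0 else c' i)"
    have split: "(\<Sum>i\<in>I. f i * c i) = f i0 * c i0 + (\<Sum>i\<in>I'. f i * c' i)" for f
    proof -
      have "(\<Sum>i\<in>I. f i * c i) = f i0 * c i0 + (\<Sum>i\<in>I'. f i * c i)"
        unfolding I'_def using i0 insert.prems by (simp add: sum.remove)
      moreover have "(\<Sum>i\<in>I'. f i * c i) = (\<Sum>i\<in>I'. f i * c' i)"
        by (rule sum.cong) (auto simp: c_def I'_def)
      ultimately show ?thesis by simp
    qed
    show ?thesis
    proof (intro exI[of _ c] conjI ballI)
      show "\<exists>i\<in>I. c i \<noteq> 0" using c' by (auto simp: c_def I'_def)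
    next
      fix k assume k: "k \<in> insert j C"
      show "(\<Sum>i\<in>I. a k i * c i) = 0"
      proof (cases "k = j")
        case True
        then show ?thesis unfolding split using i0 by (simp add: c_def)
      next
        case False
        then have kC: "k \<in> C" using k by auto
        have "(\<Sum>i\<in>I'. a' k i * c' i) = (\<Sum>i\<in>I'. a k i * c' i) - a k i0 / a j i0 * (\<Sum>i\<in>I'. a j i * c' i)"
          unfolding a'_def by (simp add: sum_subtractf sum_distrib_left algebra_simps)
        also have "\<dots> = (\<Sum>i\<in>I'. a k i * c' i) + a k i0 * c i0"
          by (simp add: c_def)
        finally have "(\<Sum>i\<in>I'. a k i * c' i) + a k i0 * c i0 = 0" using c'(2) kC by simp
        then show ?thesis unfolding split by simp
      qed
    qed
  qed
qed


definition pt :: "nat \<Rightarrow> nat \<Rightarrow> real" where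
  "pt N b = -1 + 2 * real b / real N"

lemma pt_mono: "N \<ge> 1 \<Longrightarrow> b \<le> b' \<Longrightarrow> pt N b \<le> pt N b'"
  unfolding pt_def by (auto intro!: divide_right_mono)

lemma pt_0: "pt N 0 = -1" unfolding pt_def by simp
lemma pt_N: "N \<ge> 1 \<Longrightarrow> pt N N = 1" unfolding pt_def by simp
lemma pt_Suc: "N \<ge> 1 \<Longrightarrow> pt N (Suc b) - pt N b = 2 / real N"
  unfolding pt_def by (simp add: field_simps)

lemma split_int:
  fixes f :: "real \<Rightarrow> real"
  assumes f: "set_integrable lborel J f" and N: "N \<ge> 1"
  shows "(LINT x:J|lborel. f x) = (\<Sum>b<N. LINT x:{pt N b..pt N (Suc b)}|lborel. f x)"
proof -
  have fi: "f integrable_on J" using set_borel_integral_eq_integral(1)[OF f] .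
  have "k \<le> N \<Longrightarrow> integral {-1..pt N k} f = (\<Sum>b<k. integral {pt N b..pt N (Suc b)} f)" for k
  proof (induction k)
    case 0
    then show ?case by (simp add: pt_0)
  next
    case (Suc k)
    have le: "-1 \<le> pt N k" "pt N k \<le> pt N (Suc k)" "pt N (Suc k) \<le> 1"
      using pt_mono[OF N, of 0 k] pt_mono[OF N, of k "Suc k"] pt_mono[OF N, of "Suc k" N] Suc.prems
      by (auto simp: pt_0 pt_N[OF N])
    have "f integrable_on {-1..pt N (Suc k)}"
      by (rule integrable_on_subinterval[OF fi]) (use le in auto)
    then have "integral {-1..pt N k} f + integral {pt N k..pt N (Suc k)} f = integral {-1..pt N (Suc k)} f"
      using le by (intro Henstock_Kurzweil_Integration.integral_combine) auto
    then show ?case using Suc by simp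
  qed
  from this[of N] have "integral J f = (\<Sum>b<N. integral {pt N b..pt N (Suc b)} f)"
    by (simp add: pt_N[OF N])
  moreover have "(LINT x:{pt N b..pt N (Suc b)}|lborel. f x) = integral {pt N b..pt N (Suc b)} f" if "b < N" for b
  proof -
    have le: "-1 \<le> pt N b" "pt N (Suc b) \<le> 1"
      using pt_mono[OF N, of 0 b] pt_mono[OF N, of "Suc b" N] that by (auto simp: pt_0 pt_N[OF N])
    have "set_integrable lborel {pt N b..pt N (Suc b)} f"
      by (rule set_integrable_subset[OF f]) (use le in auto)
    then show ?thesis by (rule set_borel_integral_eq_integral(2))
  qed
  ultimately show ?thesis using set_borel_integral_eq_integral(2)[OF f] by simp
qed

lemma set_int_const: "c \<le> d \<Longrightarrow> (LINT x:{c..d}|lborel. (k::real)) = k * (d - c)"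
proof -
  assume cd: "c \<le> d"
  have "set_integrable lborel {c..d} (\<lambda>x. k)"
    by (rule borel_integrable_atLeastAtMost') (intro continuous_intros)
  then have "(LINT x:{c..d}|lborel. k) = integral {c..d} (\<lambda>x. k)"
    by (rule set_borel_integral_eq_integral(2))
  also have "\<dots> = k * (d - c)" using cd by simp
  finally show ?thesis .
qed

lemma CS:
  fixes v :: "real \<Rightarrow> real"
  assumes cd: "c < d" and i1: "set_integrable lborel {c..d} (\<lambda>y. \<bar>v y\<bar>)"
    and i2: "set_integrable lborel {c..d} (\<lambda>y. v y * v y)"
  shows "(LINT y:{c..d}|lborel. \<bar>v y\<bar>)\<^sup>2 \<le> (d - c) * (LINT y:{c..d}|lborel. v y * v y)"
proof -
  define A where "A = (LINT y:{c..d}|lborel. \<bar>v y\<bar>)"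
  define S where "S = (LINT y:{c..d}|lborel. v y * v y)"
  define t where "t = A / (d - c)"
  have ic: "set_integrable lborel {c..d} (\<lambda>y. t * t)"
    by (rule borel_integrable_atLeastAtMost') (intro continuous_intros)
  have eq: "(\<lambda>y. (\<bar>v y\<bar> - t) * (\<bar>v y\<bar> - t)) = (\<lambda>y. (v y * v y - 2 * t * \<bar>v y\<bar>) + t * t)"
    by (auto simp: fun_eq_iff algebra_simps abs_mult_self_eq)
  have "0 \<le> (LINT y:{c..d}|lborel. (\<bar>v y\<bar> - t) * (\<bar>v y\<bar> - t))"
    unfolding set_lebesgue_integral_def by (intro Bochner_Integration.integral_nonneg) (auto simp: indicator_def)
  also have "\<dots> = S - 2 * t * A + t * t * (d - c)"
    unfolding eq using i1 i2 ic cd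
    by (subst set_integral_add(2)) (auto simp: set_int_const S_def A_def)
  finally have "0 \<le> S - 2 * t * A + t * t * (d - c)" .
  also have "S - 2 * t * A + t * t * (d - c) = S - A * A / (d - c)"
  proof -
    have "t * (d - c) = A" unfolding t_def using cd by simp
    then have "t * t * (d - c) = t * A" by (metis mult.assoc)
    moreover have "t * A = A * A / (d - c)" unfolding t_def by simp
    ultimately show ?thesis by simp
  qed
  finally have "A * A / (d - c) \<le> S" by simp
  then have "A * A \<le> (d - c) * S" using cd by (simp add: field_simps)
  then show ?thesis unfolding A_def S_def by (simp add: power2_eq_square)
qed

lemma sub_int:
  fixes f :: "real \<Rightarrow> real"
  assumes "set_integrable lborel J f" "-1 \<le> c" "d \<le> 1"
  shows "set_integrable lborel {c..d} f" "set_integrable lborel {c..<d} f"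
  by (rule set_integrable_subset[OF assms(1)], use assms in auto)+

lemma pow_J: "y \<in> J \<Longrightarrow> \<bar>y ^ l\<bar> \<le> (1::real)"
  unfolding power_abs by (rule power_le_one) auto

lemma diff_pow_J: "y \<in> J \<Longrightarrow> z \<in> J \<Longrightarrow> \<bar>(z - y) ^ p\<bar> \<le> (2::real) ^ p"
  unfolding power_abs by (rule power_mono) auto

lemma orth_zero:
  fixes v :: "real \<Rightarrow> real"
  assumes v: "v \<in> L2_interval" and c: "-1 \<le> c" "c \<le> 1"
   and orth: "\<forall>l\<le>p. (LINT y:{-1..<c}|lborel. y ^ l * v y) = 0"
  shows "(LINT y:{-1..<c}|lborel. (z - y) ^ p * v y) = 0"
proof -
  have [measurable]: "v \<in> borel_measurable borel" using v by auto
  have il: "set_integrable lborel {-1..<c} (\<lambda>y. y ^ l * v y)" for l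
  proof -
    have "set_integrable lborel J (\<lambda>y. y ^ l * v y)"
      by (rule bdd_mult[where B=1]) (use pow_J L2_int[OF v] in auto)
    then show ?thesis using sub_int(2) c by blast
  qed
  have e: "(z - y) ^ p * v y = (\<Sum>l\<in>{..p}. (of_nat (p choose l) * (-1) ^ l * z ^ (p - l)) * (y ^ l * v y))" for y
  proof -
    have "(z - y) ^ p = (-y + z) ^ p" by simp
    also have "\<dots> = (\<Sum>l\<le>p. of_nat (p choose l) * (-y) ^ l * z ^ (p - l))"
      by (rule binomial_ring)
    finally have "(z - y) ^ p * v y = (\<Sum>l\<le>p. of_nat (p choose l) * (-y) ^ l * z ^ (p - l)) * v y" by simp
    also have "\<dots> = (\<Sum>l\<le>p. of_nat (p choose l) * (-y) ^ l * z ^ (p - l) * v y)"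
      by (rule sum_distrib_right)
    also have "\<dots> = (\<Sum>l\<in>{..p}. (of_nat (p choose l) * (-1) ^ l * z ^ (p - l)) * (y ^ l * v y))"
    proof (rule sum.cong)
      fix l
      have "(-y) ^ l = (-1) ^ l * y ^ l" by (rule power_minus)
      then show "of_nat (p choose l) * (-y) ^ l * z ^ (p - l) * v y = (of_nat (p choose l) * (-1) ^ l * z ^ (p - l)) * (y ^ l * v y)"
        by (simp only: mult_ac)
    qed simp
    finally show ?thesis .
  qed
  have "(LINT y:{-1..<c}|lborel. (z - y) ^ p * v y)
     = (LINT y:{-1..<c}|lborel. (\<Sum>l\<in>{..p}. (of_nat (p choose l) * (-1) ^ l * z ^ (p - l)) * (y ^ l * v y)))"
    by (simp only: e)
  also have "\<dots> = (\<Sum>l\<in>{..p}. LINT y:{-1..<c}|lborel. (of_nat (p choose l) * (-1) ^ l * z ^ (p - l)) * (y ^ l * v y))"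
    by (rule set_int_cong_sum(2)) (use il in auto)
  also have "\<dots> = 0" using orth by simp
  finally show ?thesis .
qed

lemma Top_local:
  fixes v :: "real \<Rightarrow> real"
  assumes p: "p \<ge> 1" and v: "v \<in> L2_interval" and cz: "-1 \<le> c" "c \<le> z" "z \<le> 1"
    and orth: "\<forall>l\<le>p. (LINT y:{-1..<c}|lborel. y ^ l * v y) = 0"
  shows "Top p v z = (LINT y:{c..z}|lborel. (z - y) ^ p * v y)"
proof -
  have [measurable]: "v \<in> borel_measurable borel" using v by auto
  have zJ: "z \<in> J" using cz by auto
  have iJ: "set_integrable lborel J (\<lambda>y. (z - y) ^ p * v y)"
    by (rule bdd_mult[where B="2^p"]) (use diff_pow_J zJ L2_int[OF v] in auto)
  have i1: "set_integrable lborel {-1..<c} (\<lambda>y. (z - y) ^ p * v y)" using sub_int(2)[OF iJ] cz by auto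
  have i2: "set_integrable lborel {c..z} (\<lambda>y. (z - y) ^ p * v y)" using sub_int(1)[OF iJ] cz by auto
  have pw: "indicator J y *\<^sub>R (relu_pow p (z - y) * v y) =
      indicator {-1..<c} y *\<^sub>R ((z - y) ^ p * v y) + indicator {c..z} y *\<^sub>R ((z - y) ^ p * v y)" for y
    using p cz by (auto simp: indicator_def relu_pow_def max_def)
  have "Top p v z = integral\<^sup>L lborel (\<lambda>y. indicator {-1..<c} y *\<^sub>R ((z - y) ^ p * v y) + indicator {c..z} y *\<^sub>R ((z - y) ^ p * v y))"
    unfolding Top_def set_lebesgue_integral_def pw ..
  also have "\<dots> = (LINT y:{-1..<c}|lborel. (z - y) ^ p * v y) + (LINT y:{c..z}|lborel. (z - y) ^ p * v y)"
    using i1 i2 unfolding set_integrable_def set_lebesgue_integral_def by (rule Bochner_Integration.integral_add)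
  also have "\<dots> = (LINT y:{c..z}|lborel. (z - y) ^ p * v y)"
    using orth_zero[OF v cz(1) _ orth] cz by simp
  finally show ?thesis .
qed



lemma block_bound:
  fixes v :: "real \<Rightarrow> real"
  assumes p: "p \<ge> 1" and v: "v \<in> L2_interval" and cz: "-1 \<le> c" "c \<le> z" "z \<le> d" "d \<le> 1" "c < d"
    and orth: "\<forall>l\<le>p. (LINT y:{-1..<c}|lborel. y ^ l * v y) = 0"
  shows "Top p v z * Top p v z \<le> (d - c) ^ (2 * p + 1) * (LINT y:{c..d}|lborel. v y * v y)"
proof -
  have [measurable]: "v \<in> borel_measurable borel" using v by auto
  define \<delta> where "\<delta> = d - c"
  have dpos: "\<delta> > 0" using cz by (simp add: \<delta>_def)
  have zJ: "z \<in> J" using cz by auto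
  have iJ: "set_integrable lborel J (\<lambda>y. (z - y) ^ p * v y)"
    by (rule bdd_mult[where B="2^p"]) (use diff_pow_J zJ L2_int[OF v] in auto)
  have i2: "set_integrable lborel {c..z} (\<lambda>y. (z - y) ^ p * v y)" using sub_int(1)[OF iJ] cz by auto
  have va: "set_integrable lborel {c..d} (\<lambda>y. \<bar>v y\<bar>)"
    using sub_int(1)[OF set_integrable_abs[OF L2_int[OF v]]] cz by auto
  have vv: "set_integrable lborel {c..d} (\<lambda>y. v y * v y)"
    using sub_int(1)[OF L2_sq[OF v]] cz by auto
  define A where "A = (LINT y:{c..d}|lborel. \<bar>v y\<bar>)"
  have "\<bar>Top p v z\<bar> \<le> (LINT y:{c..z}|lborel. \<bar>(z - y) ^ p * v y\<bar>)"
  proof -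
    have z1: "z \<le> 1" using cz by auto
    show ?thesis unfolding Top_local[OF p v cz(1,2) z1 orth] using set_integral_norm_bound[OF i2] by simp
  qed
  also have "\<dots> \<le> (LINT y:{c..d}|lborel. \<delta> ^ p * \<bar>v y\<bar>)"
    unfolding set_lebesgue_integral_def
  proof (rule integral_mono)
    show "integrable lborel (\<lambda>x. indicat_real {c..z} x *\<^sub>R \<bar>(z - x) ^ p * v x\<bar>)"
      using set_integrable_abs[OF i2] unfolding set_integrable_def .
    show "integrable lborel (\<lambda>x. indicat_real {c..d} x *\<^sub>R (\<delta> ^ p * \<bar>v x\<bar>))"
      using set_integrable_mult_right[OF va, of "\<delta> ^ p"] unfolding set_integrable_def .
    fix y
    show "indicat_real {c..z} y *\<^sub>R \<bar>(z - y) ^ p * v y\<bar> \<le> indicat_real {c..d} y *\<^sub>R (\<delta> ^ p * \<bar>v y\<bar>)"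
    proof (cases "y \<in> {c..z}")
      case True
      then have "\<bar>z - y\<bar> ^ p \<le> \<delta> ^ p" unfolding \<delta>_def using cz by (intro power_mono) auto
      then show ?thesis using True cz by (auto simp: abs_mult power_abs intro!: mult_right_mono)
    next
      case False
      then show ?thesis using dpos by (auto simp: indicator_def)
    qed
  qed
  also have "\<dots> = \<delta> ^ p * A" unfolding A_def by simp
  finally have T1: "\<bar>Top p v z\<bar> \<le> \<delta> ^ p * A" .
  have "Top p v z * Top p v z = \<bar>Top p v z\<bar> ^ 2" by (simp add: power2_eq_square)
  also have "\<dots> \<le> (\<delta> ^ p * A) ^ 2" using T1 by (intro power_mono) auto
  also have "\<dots> = \<delta> ^ (2 * p) * A\<^sup>2" by (simp add: power_mult_distrib power_mult[symmetric] mult.commute)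
  also have "\<dots> \<le> \<delta> ^ (2 * p) * (\<delta> * (LINT y:{c..d}|lborel. v y * v y))"
    using CS[OF cz(5) va vv] dpos unfolding A_def \<delta>_def by (intro mult_left_mono) auto
  also have "\<dots> = \<delta> ^ (2 * p + 1) * (LINT y:{c..d}|lborel. v y * v y)" by simp
  finally show ?thesis unfolding \<delta>_def .
qed

lemma block_est:
  fixes v :: "real \<Rightarrow> real"
  assumes p: "p \<ge> 1" and v: "v \<in> L2_interval" and N: "N \<ge> 1"
    and orth: "\<forall>b<N. \<forall>l\<le>p. (LINT y:{-1..<pt N b}|lborel. y ^ l * v y) = 0"
  shows "(LINT z:J|lborel. Top p v z * Top p v z) \<le> (2 / real N) ^ (2 * p + 2) * (LINT z:J|lborel. v z * v z)"
proof -
  define \<delta> where "\<delta> = 2 / real N"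
  have dpos: "\<delta> > 0" using N by (simp add: \<delta>_def)
  have TL: "Top p v \<in> L2_interval" using Top_L2[OF v] .
  have bnd: "(LINT z:{pt N b..pt N (Suc b)}|lborel. Top p v z * Top p v z)
      \<le> \<delta> * (\<delta> ^ (2 * p + 1) * (LINT y:{pt N b..pt N (Suc b)}|lborel. v y * v y))" if b: "b < N" for b
  proof -
    have le: "-1 \<le> pt N b" "pt N (Suc b) \<le> 1" "pt N b \<le> pt N (Suc b)"
      using pt_mono[OF N, of 0 b] pt_mono[OF N, of "Suc b" N] pt_mono[OF N, of b "Suc b"] b
      by (auto simp: pt_0 pt_N[OF N])
    have dd: "pt N (Suc b) - pt N b = \<delta>" using pt_Suc[OF N] unfolding \<delta>_def .
    have "(LINT z:{pt N b..pt N (Suc b)}|lborel. Top p v z * Top p v z)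
       \<le> (LINT z:{pt N b..pt N (Suc b)}|lborel. \<delta> ^ (2 * p + 1) * (LINT y:{pt N b..pt N (Suc b)}|lborel. v y * v y))"
    proof (rule set_integral_mono)
      show "set_integrable lborel {pt N b..pt N (Suc b)} (\<lambda>z. Top p v z * Top p v z)"
        using sub_int(1)[OF L2_sq[OF TL]] le by auto
      show "set_integrable lborel {pt N b..pt N (Suc b)} (\<lambda>z. \<delta> ^ (2 * p + 1) * (LINT y:{pt N b..pt N (Suc b)}|lborel. v y * v y))"
        by (rule borel_integrable_atLeastAtMost') (intro continuous_intros)
      fix z assume z: "z \<in> {pt N b..pt N (Suc b)}"
      show "Top p v z * Top p v z \<le> \<delta> ^ (2 * p + 1) * (LINT y:{pt N b..pt N (Suc b)}|lborel. v y * v y)"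
        using block_bound[OF p v le(1), of z "pt N (Suc b)"] z le dd dpos orth b by auto
    qed
    also have "\<dots> = \<delta> * (\<delta> ^ (2 * p + 1) * (LINT y:{pt N b..pt N (Suc b)}|lborel. v y * v y))"
      using set_int_const[OF le(3)] dd by (simp add: mult.commute)
    finally show ?thesis .
  qed
  have "(LINT z:J|lborel. Top p v z * Top p v z) = (\<Sum>b<N. LINT z:{pt N b..pt N (Suc b)}|lborel. Top p v z * Top p v z)"
    by (rule split_int[OF L2_sq[OF TL] N])
  also have "\<dots> \<le> (\<Sum>b<N. \<delta> * (\<delta> ^ (2 * p + 1) * (LINT y:{pt N b..pt N (Suc b)}|lborel. v y * v y)))"
    by (rule sum_mono) (use bnd in auto)
  also have "\<dots> = \<delta> ^ (2 * p + 2) * (\<Sum>b<N. LINT y:{pt N b..pt N (Suc b)}|lborel. v y * v y)"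
    by (simp add: sum_distrib_left mult.assoc)
  also have "\<dots> = \<delta> ^ (2 * p + 2) * (LINT z:J|lborel. v z * v z)"
    using split_int[OF L2_sq[OF v] N] by simp
  finally show ?thesis unfolding \<delta>_def .
qed



lemma L2_lin_int:
  fixes F :: "'i \<Rightarrow> real \<Rightarrow> real"
  assumes I: "finite I" and F: "\<And>i. i \<in> I \<Longrightarrow> F i \<in> L2_interval"
  shows "set_integrable lborel J (\<lambda>x. (\<Sum>i\<in>I. c i * F i x) * (\<Sum>i\<in>I. c i * F i x))"
    and "(LINT x:J|lborel. (\<Sum>i\<in>I. c i * F i x) * (\<Sum>i\<in>I. c i * F i x))
         = (\<Sum>i\<in>I. \<Sum>j\<in>I. c i * c j * (LINT x:J|lborel. F i x * F j x))"
proof -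
  have e: "(\<Sum>i\<in>I. c i * F i x) * (\<Sum>i\<in>I. c i * F i x) = (\<Sum>i\<in>I. \<Sum>j\<in>I. c i * c j * (F i x * F j x))" for x
    by (simp add: sum_product mult_ac)
  have ij: "set_integrable lborel J (\<lambda>x. c i * c j * (F i x * F j x))" if "i \<in> I" "j \<in> I" for i j
    using L2_mult[OF F[OF that(1)] F[OF that(2)]] by simp
  have ii: "set_integrable lborel J (\<lambda>x. \<Sum>j\<in>I. c i * c j * (F i x * F j x))" if "i \<in> I" for i
    by (rule set_int_cong_sum(1)[OF I]) (use ij that in auto)
  show "set_integrable lborel J (\<lambda>x. (\<Sum>i\<in>I. c i * F i x) * (\<Sum>i\<in>I. c i * F i x))"
    unfolding e by (rule set_int_cong_sum(1)[OF I]) (use ii in auto)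
  have "(LINT x:J|lborel. (\<Sum>i\<in>I. c i * F i x) * (\<Sum>i\<in>I. c i * F i x))
      = (\<Sum>i\<in>I. LINT x:J|lborel. (\<Sum>j\<in>I. c i * c j * (F i x * F j x)))"
    unfolding e by (rule set_int_cong_sum(2)[OF I]) (use ii in auto)
  also have "\<dots> = (\<Sum>i\<in>I. \<Sum>j\<in>I. LINT x:J|lborel. c i * c j * (F i x * F j x))"
    by (rule sum.cong[OF refl], rule set_int_cong_sum(2)[OF I]) (use ij in auto)
  also have "\<dots> = (\<Sum>i\<in>I. \<Sum>j\<in>I. c i * c j * (LINT x:J|lborel. F i x * F j x))"
    by simp
  finally show "(LINT x:J|lborel. (\<Sum>i\<in>I. c i * F i x) * (\<Sum>i\<in>I. c i * F i x))
         = (\<Sum>i\<in>I. \<Sum>j\<in>I. c i * c j * (LINT x:J|lborel. F i x * F j x))" .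
qed

lemma L2_lin:
  fixes F :: "'i \<Rightarrow> real \<Rightarrow> real"
  assumes I: "finite I" and F: "\<And>i. i \<in> I \<Longrightarrow> F i \<in> L2_interval"
  shows "(\<lambda>x. \<Sum>i\<in>I. c i * F i x) \<in> L2_interval"
proof -
  have "(\<lambda>x. \<Sum>i\<in>I. c i * F i x) \<in> borel_measurable borel"
    by (rule borel_measurable_sum) (use F in auto)
  moreover have "set_integrable lborel J (\<lambda>x. (\<Sum>i\<in>I. c i * F i x)\<^sup>2)"
    using L2_lin_int(1)[OF I F] by (simp add: power2_eq_square)
  ultimately show ?thesis unfolding L2_interval_def by auto
qed

lemma Top_lin:
  fixes F :: "'i \<Rightarrow> real \<Rightarrow> real"
  assumes I: "finite I" and F: "\<And>i. i \<in> I \<Longrightarrow> F i \<in> L2_interval"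
  shows "Top p (\<lambda>x. \<Sum>i\<in>I. c i * F i x) z = (\<Sum>i\<in>I. c i * Top p (F i) z)"
proof -
  have ii: "set_integrable lborel J (\<lambda>y. c i * (relu_pow p (z - y) * F i y))" if "i \<in> I" for i
  proof -
    have "set_integrable lborel J (\<lambda>y. relu_pow p (z - y) * F i y)"
    proof (rule bdd_mult[where B="(max 0 (z + 1)) ^ p"])
      show "F i \<in> borel_measurable borel" using F[OF that] by auto
      show "set_integrable lborel J (F i)" using L2_int[OF F[OF that]] .
      fix y assume "y \<in> J"
      then show "\<bar>relu_pow p (z - y)\<bar> \<le> (max 0 (z + 1)) ^ p"
        using relu_bound[of "z - y" "z + 1" p] relu_nonneg[of p "z - y"] by auto
    qed auto
    then show ?thesis by simp
  qed
  have "Top p (\<lambda>x. \<Sum>i\<in>I. c i * F i x) z = (LINT y:J|lborel. (\<Sum>i\<in>I. c i * (relu_pow p (z - y) * F i y)))"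
    unfolding Top_def by (simp add: sum_distrib_left mult_ac)
  also have "\<dots> = (\<Sum>i\<in>I. LINT y:J|lborel. c i * (relu_pow p (z - y) * F i y))"
    by (rule set_int_cong_sum(2)[OF I]) (use ii in auto)
  also have "\<dots> = (\<Sum>i\<in>I. c i * Top p (F i) z)" unfolding Top_def by simp
  finally show ?thesis .
qed

lemma orth_lin:
  fixes F :: "'i \<Rightarrow> real \<Rightarrow> real"
  assumes I: "finite I" and F: "\<And>i. i \<in> I \<Longrightarrow> F i \<in> L2_interval" and c: "-1 \<le> a" "a \<le> 1"
  shows "(LINT y:{-1..<a}|lborel. y ^ l * (\<Sum>i\<in>I. c i * F i y)) = (\<Sum>i\<in>I. c i * (LINT y:{-1..<a}|lborel. y ^ l * F i y))"
proof -
  have ii: "set_integrable lborel {-1..<a} (\<lambda>y. c i * (y ^ l * F i y))" if "i \<in> I" for i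
  proof -
    have "set_integrable lborel J (\<lambda>y. y ^ l * F i y)"
      by (rule bdd_mult[where B=1]) (use pow_J L2_int[OF F[OF that]] F[OF that] in auto)
    then show ?thesis using sub_int(2) c by auto
  qed
  have "(LINT y:{-1..<a}|lborel. y ^ l * (\<Sum>i\<in>I. c i * F i y)) = (LINT y:{-1..<a}|lborel. (\<Sum>i\<in>I. c i * (y ^ l * F i y)))"
    by (simp add: sum_distrib_left mult_ac)
  also have "\<dots> = (\<Sum>i\<in>I. LINT y:{-1..<a}|lborel. c i * (y ^ l * F i y))"
    by (rule set_int_cong_sum(2)[OF I]) (use ii in auto)
  also have "\<dots> = (\<Sum>i\<in>I. c i * (LINT y:{-1..<a}|lborel. y ^ l * F i y))" by simp
  finally show ?thesis .
qed



lemma diag_sum: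
  assumes "finite I" "\<And>i j. i \<in> I \<Longrightarrow> j \<in> I \<Longrightarrow> i \<noteq> j \<Longrightarrow> g i j = (0::real)"
  shows "(\<Sum>i\<in>I. \<Sum>j\<in>I. g i j) = (\<Sum>i\<in>I. g i i)"
proof (rule sum.cong[OF refl])
  fix i assume i: "i \<in> I"
  have "(\<Sum>j\<in>I. g i j) = (\<Sum>j\<in>I. if j = i then g i i else 0)"
    by (rule sum.cong[OF refl]) (use assms(2) i in auto)
  also have "\<dots> = g i i" using assms(1) i by (simp add: sum.delta)
  finally show "(\<Sum>j\<in>I. g i j) = g i i" .
qed

theorem proposition3:
  fixes p :: nat and \<mu> :: "nat \<Rightarrow> real"
  assumes "p \<ge> 1"
    and "\<And>k. \<mu> (Suc k) < \<mu> k"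
    and "range \<mu> = {m. m \<noteq> 0 \<and> is_eigenvalue_K p m}"
  shows "\<mu> \<in> O(\<lambda>k. 1 / real k ^ (2 * p + 2))"
proof -
  note p = assms(1)
  have ev: "\<mu> k \<noteq> 0 \<and> is_eigenvalue_K p (\<mu> k)" for k
  proof -
    have "\<mu> k \<in> range \<mu>" by simp
    then show ?thesis using assms(3) by simp
  qed
  have "\<forall>k. \<exists>f. f \<in> L2_interval \<and> \<not> (AE x in lborel. x \<in> J \<longrightarrow> f x = 0) \<and>
        (AE x in lborel. x \<in> J \<longrightarrow> K_op p f x = \<mu> k * f x)"
    using ev unfolding is_eigenvalue_K_def by blast
  from choice[OF this] obtain h where hh: "\<forall>k. h k \<in> L2_interval \<and> \<not> (AE x in lborel. x \<in> J \<longrightarrow> h k x = 0) \<and>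
        (AE x in lborel. x \<in> J \<longrightarrow> K_op p (h k) x = \<mu> k * h k x)"
    by blast
  have hL: "h k \<in> L2_interval" for k using hh by blast
  have hnz: "\<not> (AE x in lborel. x \<in> J \<longrightarrow> h k x = 0)" for k using hh by blast
  have he: "AE x in lborel. x \<in> J \<longrightarrow> K_op p (h k) x = \<mu> k * h k x" for k using hh by blast
  define nn where "nn k = (LINT x:J|lborel. h k x * h k x)" for k
  have nnpos: "nn k > 0" for k unfolding nn_def by (rule norm_pos[OF hL hnz])
  have ie: "(LINT z:J|lborel. Top p (h i) z * Top p (h j) z) = \<mu> i * (LINT x:J|lborel. h i x * h j x)" for i j
    by (rule eig_inner[OF hL he hL])
  have mono_le: "i \<le> j \<Longrightarrow> \<mu> j \<le> \<mu> i" for i j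
    by (rule lift_Suc_antimono_le[of \<mu>]) (use assms(2) less_imp_le in auto)
  have strict: "i < j \<Longrightarrow> \<mu> j < \<mu> i" for i j
    using lift_Suc_mono_less[of "\<lambda>n. - \<mu> n" i j] assms(2) by auto
  have inj: "i \<noteq> j \<Longrightarrow> \<mu> i \<noteq> \<mu> j" for i j
    using strict[of i j] strict[of j i] by (cases "i < j") auto
  have orthog: "(LINT x:J|lborel. h i x * h j x) = 0" if "i \<noteq> j" for i j
  proof -
    have "\<mu> i * (LINT x:J|lborel. h i x * h j x) = (LINT z:J|lborel. Top p (h i) z * Top p (h j) z)"
      using ie by simp
    also have "\<dots> = (LINT z:J|lborel. Top p (h j) z * Top p (h i) z)" by (simp add: mult.commute)
    also have "\<dots> = \<mu> j * (LINT x:J|lborel. h j x * h i x)" using ie by simp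
    also have "\<dots> = \<mu> j * (LINT x:J|lborel. h i x * h j x)" by (simp add: mult.commute)
    finally have "(\<mu> i - \<mu> j) * (LINT x:J|lborel. h i x * h j x) = 0" by (simp add: algebra_simps)
    then show ?thesis using inj[OF that] by simp
  qed
  have pos: "\<mu> k > 0" for k
  proof -
    have "\<mu> k * nn k = (LINT z:J|lborel. Top p (h k) z * Top p (h k) z)" using ie unfolding nn_def by simp
    also have "\<dots> \<ge> 0" unfolding set_lebesgue_integral_def
      by (intro Bochner_Integration.integral_nonneg) (auto simp: indicator_def)
    finally have "0 \<le> \<mu> k * nn k" .
    then have "\<mu> k \<ge> 0" using nnpos[of k] by (simp add: zero_le_mult_iff)
    then show ?thesis using ev[of k] by simp
  qed
  have key: "\<mu> ((p + 1) * N) \<le> (2 / real N) ^ (2 * p + 2)" if N: "N \<ge> 1" for N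
  proof -
    define M where "M = (p + 1) * N"
    define a where "a = (\<lambda>j i. LINT y:{-1..<pt N (j div (p + 1))}|lborel. y ^ (j mod (p + 1)) * h i y)"
    have "card {..<M} < card {..M}" by simp
    from linalg[OF _ _ this, of a] obtain c where
      c: "\<exists>i\<in>{..M}. c i \<noteq> 0" "\<forall>j\<in>{..<M}. (\<Sum>i\<in>{..M}. a j i * c i) = 0" by auto
    define v where "v = (\<lambda>y. \<Sum>i\<in>{..M}. c i * h i y)"
    have vL: "v \<in> L2_interval" unfolding v_def by (rule L2_lin) (use hL in auto)
    have orth: "\<forall>b<N. \<forall>l\<le>p. (LINT y:{-1..<pt N b}|lborel. y ^ l * v y) = 0"
    proof (intro allI impI)
      fix b l assume b: "b < N" and l: "l \<le> p"
      define j where "j = l + b * (p + 1)"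
      have lp: "l < p + 1" using l by simp
      have d1: "(l + b * (p + 1)) div (p + 1) = b + l div (p + 1)" by (rule div_mult_self1) simp
      have d2: "(l + b * (p + 1)) mod (p + 1) = l mod (p + 1)" by (rule mod_mult_self1)
      have jdiv: "j div (p + 1) = b" "j mod (p + 1) = l"
        unfolding j_def d1 d2 using lp by (simp_all only: div_less mod_less)
      have "j < (b + 1) * (p + 1)" unfolding j_def using l by simp
      also have "\<dots> \<le> N * (p + 1)" using b by (intro mult_right_mono) auto
      finally have jM: "j < M" unfolding M_def by (simp add: mult.commute)
      have le: "-1 \<le> pt N b" "pt N b \<le> 1"
        using pt_mono[OF N, of 0 b] pt_mono[OF N, of b N] b by (auto simp: pt_0 pt_N[OF N])
      have "(LINT y:{-1..<pt N b}|lborel. y ^ l * v y) = (\<Sum>i\<in>{..M}. c i * (LINT y:{-1..<pt N b}|lborel. y ^ l * h i y))"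
        unfolding v_def by (rule orth_lin) (use hL le in auto)
      also have "\<dots> = (\<Sum>i\<in>{..M}. a j i * c i)" unfolding a_def jdiv by (simp add: mult.commute)
      also have "\<dots> = 0" using c(2) jM by auto
      finally show "(LINT y:{-1..<pt N b}|lborel. y ^ l * v y) = 0" .
    qed
    have BE: "(LINT z:J|lborel. Top p v z * Top p v z) \<le> (2 / real N) ^ (2 * p + 2) * (LINT z:J|lborel. v z * v z)"
      by (rule block_est[OF p vL N orth])
    define Q where "Q = (\<Sum>i\<in>{..M}. c i * c i * nn i)"
    have TvE: "Top p v z = (\<Sum>i\<in>{..M}. c i * Top p (h i) z)" for z
      unfolding v_def by (rule Top_lin) (use hL in auto)
    have "(LINT z:J|lborel. Top p v z * Top p v z)
        = (LINT z:J|lborel. (\<Sum>i\<in>{..M}. c i * Top p (h i) z) * (\<Sum>i\<in>{..M}. c i * Top p (h i) z))"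
      unfolding TvE ..
    also have "\<dots> = (\<Sum>i\<in>{..M}. \<Sum>j\<in>{..M}. c i * c j * (LINT z:J|lborel. Top p (h i) z * Top p (h j) z))"
      by (rule L2_lin_int(2)) (use Top_L2[OF hL] in auto)
    also have "\<dots> = (\<Sum>i\<in>{..M}. c i * c i * (\<mu> i * nn i))"
      unfolding ie nn_def by (rule diag_sum) (use orthog in auto)
    finally have LT: "(LINT z:J|lborel. Top p v z * Top p v z) = (\<Sum>i\<in>{..M}. c i * c i * (\<mu> i * nn i))" .
    have "(LINT z:J|lborel. v z * v z) = (\<Sum>i\<in>{..M}. \<Sum>j\<in>{..M}. c i * c j * (LINT x:J|lborel. h i x * h j x))"
      unfolding v_def by (rule L2_lin_int(2)) (use hL in auto)
    also have "\<dots> = Q"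
      unfolding Q_def nn_def by (rule diag_sum) (use orthog in auto)
    finally have LV: "(LINT z:J|lborel. v z * v z) = Q" .
    obtain i0 where i0: "i0 \<in> {..M}" "c i0 \<noteq> 0" using c(1) by auto
    have Qpos: "Q > 0" unfolding Q_def
    proof (rule sum_pos2[OF _ i0(1)])
      have "0 < c i0 * c i0" using i0(2) not_real_square_gt_zero by blast
      then show "0 < c i0 * c i0 * nn i0" using nnpos[of i0] by (rule mult_pos_pos)
      fix i show "0 \<le> c i * c i * nn i" using nnpos[of i] by simp
    qed simp
    have "\<mu> M * Q = (\<Sum>i\<in>{..M}. \<mu> M * (c i * c i * nn i))" unfolding Q_def by (simp add: sum_distrib_left)
    also have "\<dots> \<le> (\<Sum>i\<in>{..M}. c i * c i * (\<mu> i * nn i))"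
    proof (rule sum_mono)
      fix i assume "i \<in> {..M}"
      then have "\<mu> M \<le> \<mu> i" using mono_le by auto
      moreover have "0 \<le> c i * c i * nn i" using nnpos[of i] by simp
      ultimately have "\<mu> M * (c i * c i * nn i) \<le> \<mu> i * (c i * c i * nn i)" by (rule mult_right_mono)
      then show "\<mu> M * (c i * c i * nn i) \<le> c i * c i * (\<mu> i * nn i)" by (simp add: mult_ac)
    qed
    also have "\<dots> \<le> (2 / real N) ^ (2 * p + 2) * Q" using BE LT LV by simp
    finally have "\<mu> M * Q \<le> (2 / real N) ^ (2 * p + 2) * Q" .
    then have "\<mu> M \<le> (2 / real N) ^ (2 * p + 2)" using Qpos by (rule mult_right_le_imp_le)
    then show ?thesis unfolding M_def .
  qed
  show ?thesis
  proof (rule bigoI[where c = "(4 * real (p + 1)) ^ (2 * p + 2)"])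
    show "\<forall>\<^sub>F k in at_top. norm (\<mu> k) \<le> (4 * real (p + 1)) ^ (2 * p + 2) * norm (1 / real k ^ (2 * p + 2))"
      unfolding eventually_at_top_linorder
    proof (intro exI[of _ "p + 1"] allI impI)
      fix k :: nat assume k: "k \<ge> p + 1"
      define N where "N = k div (p + 1)"
      have N1: "N \<ge> 1"
      proof -
        have "(p + 1) div (p + 1) \<le> k div (p + 1)" by (rule div_le_mono[OF k])
        then show ?thesis unfolding N_def by simp
      qed
      have MN: "(p + 1) * N \<le> k" unfolding N_def by (rule times_div_less_eq_dividend)
      have kl: "k < (p + 1) * (N + 1)"
      proof -
        have "k = (p + 1) * N + k mod (p + 1)" unfolding N_def by (rule div_mult_mod_eq[symmetric, of k "p + 1", unfolded mult.commute[of "k div (p + 1)"]])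
        moreover have "k mod (p + 1) < p + 1" by (rule mod_less_divisor) simp
        moreover have "(p + 1) * (N + 1) = (p + 1) * N + (p + 1)" by (simp only: distrib_left mult_1_right)
        ultimately show ?thesis by linarith
      qed
      have kl2: "real k \<le> 2 * real (p + 1) * real N"
      proof -
        have "k \<le> (p + 1) * (N + 1)" using kl by simp
        also have "\<dots> \<le> (p + 1) * (2 * N)" using N1 by (intro mult_left_mono) auto
        finally have "k \<le> 2 * (p + 1) * N" by simp
        then show ?thesis by (metis of_nat_le_iff of_nat_mult of_nat_numeral)
      qed
      have kpos: "real k > 0" using k by simp
      have Npos: "real N > 0" using N1 by simp
      have "\<mu> k \<le> \<mu> ((p + 1) * N)" by (rule mono_le[OF MN])
      also have "\<dots> \<le> (2 / real N) ^ (2 * p + 2)" by (rule key[OF N1])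
      also have "\<dots> \<le> (4 * real (p + 1) / real k) ^ (2 * p + 2)"
      proof (rule power_mono)
        show "2 / real N \<le> 4 * real (p + 1) / real k"
          using kl2 kpos Npos by (simp add: field_simps)
      qed (use Npos in simp)
      also have "\<dots> = (4 * real (p + 1)) ^ (2 * p + 2) * (1 / real k ^ (2 * p + 2))"
        by (simp add: power_divide)
      finally have "\<mu> k \<le> (4 * real (p + 1)) ^ (2 * p + 2) * (1 / real k ^ (2 * p + 2))" .
      then show "norm (\<mu> k) \<le> (4 * real (p + 1)) ^ (2 * p + 2) * norm (1 / real k ^ (2 * p + 2))"
        using pos[of k] kpos by simp
    qed
  qed
qed


end
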